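(* Let $G$ be a finite group and $p$ a prime dividing $|G|$ such that $G$ has a normal cyclic Sylow $p$-subgroup $P$, and let $H$ be the unique subgroup of $P$ of order $p$. If $x\in G$ is such that the coset $Hx$ is not contained in the conjugacy class $x^G$ of $x$, then $x\in C_G(P)$.
   Context: $x^G=\{g^{-1}xg: g\in G\}$ is the conjugacy class of $x$, and $C_G(P)$ is the centralizer of $P$ in $G$. *)

theory Defs
  imports "HOL-Algebra.Algebra"
begin

definition conj_class :: "('a, 'b) monoid_scheme \<Rightarrow> 'a \<Rightarrow> 'a set" where
  "conj_class G x = {inv\<^bsub>G\<^esub> g \<otimes>\<^bsub>G\<^esub> x \<otimes>\<^bsub>G\<^esub> g | g. g \<in> carrier G}"

definition centralizer_of :: "('a, 'b) monoid_scheme \<Rightarrow> 'a set \<Rightarrow> 'a set" where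
  "centralizer_of G P = {g \<in> carrier G. \<forall>y \<in> P. g \<otimes>\<^bsub>G\<^esub> y = y \<otimes>\<^bsub>G\<^esub> g}"

definition sylow_subgroup :: "('a, 'b) monoid_scheme \<Rightarrow> nat \<Rightarrow> 'a set \<Rightarrow> bool" where
  "sylow_subgroup G p P \<longleftrightarrow> subgroup P G \<and> card P = p ^ Factorial_Ring.multiplicity p (order G)"

end

theory Submission
  imports Defs
begin

lemma numth:
  fixes p m :: nat and d j :: int
  assumes p: "Factorial_Ring.prime p" and nd: "\<not> int p ^ m dvd d" and jd: "int p ^ m dvd j * int p"
  shows "\<exists>k. int p ^ m dvd k * d - j"
proof -
  have pi: "Factorial_Ring.prime (int p)" using p by simp
  have m0: "m \<noteq> 0" using nd by (metis power_0 one_dvd)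
  obtain g where g: "g = gcd d (int p ^ m)" by blast
  have "g dvd int p ^ m" using g by simp
  then obtain i where i: "i \<le> m" "normalize g = int p ^ i" using divides_primepow[OF pi] by metis
  have gi: "g = int p ^ i" using i g by simp
  have "i \<noteq> m" using gi g nd by (metis gcd_dvd1)
  hence "g dvd int p ^ (m - 1)" using gi i by (simp add: le_imp_power_dvd)
  moreover have "int p ^ (m - 1) dvd j"
  proof -
    have "int p ^ (m-1) * int p dvd j * int p" using jd m0
      by (metis power_minus_mult zero_less_iff_neq_zero)
    thus ?thesis using p by (simp add: prime_gt_0_nat)
  qed
  ultimately have "g dvd j" by (rule dvd_trans)
  then obtain t where t: "j = g * t" by blast
  obtain u v where uv: "u * d + v * int p ^ m = g" using bezout_int g by metis
  have "(u*t) * d - j = - (t*v) * int p ^ m" unfolding t uv[symmetric] by (simp add: algebra_simps)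
  thus ?thesis by (metis dvd_triv_right)
qed

theorem lemma4p1:
  fixes G (structure) and p :: nat and P H :: "'a set" and x :: 'a
  assumes "group G" and "finite (carrier G)"
    and "Factorial_Ring.prime p" and "p dvd order G"
    and "sylow_subgroup G p P" and "P \<lhd> G"
    and "cyclic_group (subgroup_generated G P)"
    and "subgroup H G" and "H \<subseteq> P" and "card H = p"
    and "x \<in> carrier G"
    and "\<not> (H #> x \<subseteq> conj_class G x)"
  shows "x \<in> centralizer_of G P"
proof (rule ccontr)
  assume nc: "x \<notin> centralizer_of G P"
  interpret group G by fact
  have sP: "subgroup P G" using assms(5) unfolding sylow_subgroup_def by auto
  interpret nP: normal P G by fact
  have cP: "carrier (subgroup_generated G P) = P" using sP by simp
  have gS: "group (subgroup_generated G P)" by (rule group_subgroup_generated)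
  obtain a where aP: "a \<in> P" and Pr: "P = range (\<lambda>n::int. a [^] n)"
    using group.cyclic_group[OF gS] assms(7) cP int_pow_subgroup_generated
    by (smt (verit) image_cong)
  have aG: "a \<in> carrier G" using aP sP subgroup.subset by blast
  have PG: "P \<subseteq> carrier G" using sP subgroup.subset by blast
  have genP: "generate G {a} = P" using generate_pow[OF aG] Pr by auto
  define n where "n = ord a"
  have ncard: "n = card P" using generate_pow_card[OF aG] genP n_def by simp
  define m where "m = Factorial_Ring.multiplicity p (order G)"
  have npm: "n = p ^ m" using ncard assms(5) unfolding sylow_subgroup_def m_def by simp
  define c where "c = (\<lambda>g. inv x \<otimes> g \<otimes> x)"
  have chom: "c \<in> hom G G"
    unfolding c_def hom_def using assms(11) by (auto simp: m_assoc) (simp add: m_assoc[symmetric])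
  have cpow: "c (a [^] (k::int)) = (c a) [^] k" for k
    using hom_int_pow[OF chom aG is_group is_group] .
  have caP: "c a \<in> P" unfolding c_def using nP.inv_op_closed1 assms(11) aP by blast
  then obtain r where r: "c a = a [^] (r::int)" using Pr by auto
  have "c a \<noteq> a"
  proof
    assume ca: "c a = a"
    have "\<forall>y\<in>P. x \<otimes> y = y \<otimes> x"
    proof
      fix y assume "y \<in> P"
      then obtain k where y: "y = a [^] (k::int)" using Pr by auto
      have yG: "y \<in> carrier G" using y aG by simp
      have "c y = y" using cpow ca y by simp
      hence "x \<otimes> (inv x \<otimes> y \<otimes> x) = x \<otimes> y" unfolding c_def by simp
      thus "x \<otimes> y = y \<otimes> x" using yG assms(11)
        by (metis inv_closed m_assoc m_closed r_inv l_one)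
    qed
    thus False using nc assms(11) unfolding centralizer_of_def by auto
  qed
  hence nd: "\<not> int n dvd (1 - r)"
    using int_pow_eq[OF aG, of r 1] r n_def by (metis int_pow_1[OF aG])
  have "H #> x \<subseteq> conj_class G x"
  proof
    fix z assume "z \<in> H #> x"
    then obtain h where h: "h \<in> H" "z = h \<otimes> x" unfolding r_coset_def by auto
    have hG: "h \<in> carrier G" using h assms(8) subgroup.subset by blast
    have hp: "h [^] p = \<one>"
    proof -
      have gH: "group (subgroup_generated G H)" by (rule group_subgroup_generated)
      have cH: "carrier (subgroup_generated G H) = H" using subgroup.carrier_subgroup_generated_subgroup[OF assms(8)] .
      have "h [^]\<^bsub>subgroup_generated G H\<^esub> order (subgroup_generated G H) = \<one>\<^bsub>subgroup_generated G H\<^esub>"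
        using group.pow_order_eq_1[OF gH] h cH by simp
      thus ?thesis using cH assms(10) unfolding order_def
        by (simp add: pow_subgroup_generated one_subgroup_generated)
    qed
    have chP: "c h \<in> P" unfolding c_def using nP.inv_op_closed1 assms(11) h assms(9) by blast
    then obtain j where j: "c h = a [^] (j::int)" using Pr by auto
    have "c h [^] p = \<one>"
      using hom_nat_pow[OF chom hG is_group is_group, of p] hp chom assms(11) by (simp add: c_def)
    hence "a [^] (j * int p) = \<one>" using j int_pow_pow[OF aG, of j "int p"]
      by (metis int_pow_int)
    hence jd: "int n dvd j * int p" using int_pow_eq_id[OF aG] n_def by simp
    obtain k where k: "int p ^ m dvd k * (1 - r) - j"
      using numth[OF assms(3)] nd jd npm by (metis of_nat_power)
    define g where "g = a [^] k"
    have gG: "g \<in> carrier G" using g_def aG by simp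
    have "inv g \<otimes> x \<otimes> g = x \<otimes> c (inv g) \<otimes> g"
      unfolding c_def using gG assms(11) by (simp add: m_assoc[symmetric])
    also have "c (inv g) = a [^] (- r * k)"
      unfolding g_def using cpow[of "-k"] r int_pow_pow[OF aG] int_pow_neg[OF aG] by simp
    also have "x \<otimes> a [^] (- r * k) \<otimes> g = x \<otimes> a [^] (k * (1 - r))"
      unfolding g_def using aG assms(11) int_pow_mult[OF aG, of "- r * k" k]
      by (simp add: m_assoc algebra_simps)
    also have "a [^] (k * (1 - r)) = a [^] j"
      using int_pow_eq[OF aG] k npm n_def by (metis dvd_minus_iff minus_diff_eq of_nat_power)
    also have "x \<otimes> a [^] j = h \<otimes> x"
      using j unfolding c_def using hG assms(11)
      by (metis inv_closed m_assoc m_closed r_inv l_one)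
    finally have "inv g \<otimes> x \<otimes> g = z" using h by simp
    thus "z \<in> conj_class G x" unfolding conj_class_def using gG by blast
  qed
  thus False using assms(12) by simp
qed

end
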